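(* For each $N\in\mathbb{N}^*$ there exists a constant $K_N$ such that for all $(i_1,\dots,i_N)\in\{1,\dots,6\}^N$ and all $(x,y)\in\mathcal{D}$, $$|x_{i_1,\dots,i_N}(x,y)-z_{i_1,\dots,i_N}(x)|\leq K_N y\quad\text{and}\quad |y_{i_1,\dots,i_N}(x,y)|\leq K_N y.$$
   Context: Every non-degenerate triangle is mapped by a similitude to a triangle with vertices $(0,0)$, $(1,0)$, $(x,y)$, with the longest edge sent to $[(0,0),(1,0)]$ and the shortest edge to $[(0,0),(x,y)]$; $(x,y)$ is its characterizing point and $\mathcal{D}\subset[0,1/2]\times[0,\sqrt3/2]$ is the set of characterizing points (flat triangles have $y=0$). For the triangle with vertices $A=(0,0)$, $B=(x,y)$, $C=(1,0)$, let $D,E,F$ be the midpoints of $[A,B],[B,C],[A,C]$ and $G$ the barycenter; the barycentric subdivision gives $T_1=\{A,D,G\}$, $T_2=\{D,B,G\}$, $T_3=\{B,E,G\}$, $T_4=\{E,C,G\}$, $T_5=\{C,F,G\}$, $T_6=\{F,A,G\}$, and $(x_i(x,y),y_i(x,y))$ denotes the characterizing point of $T_i$. Set $z_i(x)=x_i(x,0)$ for $x\in[0,1/2]$. Let $(\iota_n)_{n\ge1}$ be i.i.d. uniform on $\{1,\dots,6\}$ and define the coupled chains $(X_{n+1},Y_{n+1})=(x_{\iota_{n+1}}(X_n,Y_n),y_{\iota_{n+1}}(X_n,Y_n))$ and $Z_{n+1}=z_{\iota_{n+1}}(Z_n)$. For $(x,y)\in\mathcal{D}$ and $(i_1,\dots,i_N)\in\{1,\dots,6\}^N$,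 $x_{i_1,\dots,i_N}(x,y)$, $y_{i_1,\dots,i_N}(x,y)$ and $z_{i_1,\dots,i_N}(x)$ denote the values of $X_N$, $Y_N$ and $Z_N$ when $(X_0,Y_0)=(x,y)$, $Z_0=x$ and $(\iota_1,\dots,\iota_N)=(i_1,\dots,i_N)$. *)

theory Defs
  imports Complex_Main
begin

type_synonym pt = "real \<times> real"

definition seglen :: "pt \<Rightarrow> pt \<Rightarrow> real" where
  "seglen P Q = sqrt ((fst P - fst Q)^2 + (snd P - snd Q)^2)"

text \<open>Characterizing point of the triangle with vertices P, Q, R: with side lengths
  a (longest) \<ge> b (middle) \<ge> c (shortest), the similitude sending the longest edge to
  [(0,0),(1,0)] and the shortest edge to [(0,0),(x,y)] (y \<ge> 0) gives the point (x,y) with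
  |(x,y)| = c/a and |(x,y)-(1,0)| = b/a, i.e. the formulas below.\<close>
definition charpt :: "pt \<Rightarrow> pt \<Rightarrow> pt \<Rightarrow> pt" where
  "charpt P Q R =
     (let l1 = seglen P Q; l2 = seglen Q R; l3 = seglen R P;
          a = max l1 (max l2 l3); c = min l1 (min l2 l3); b = l1 + l2 + l3 - a - c;
          x = (a^2 + c^2 - b^2) / (2 * a^2)
      in (x, sqrt ((c / a)^2 - x^2)))"

definition charD :: "pt set" where
  "charD = {charpt P Q R | P Q R. \<not> (P = Q \<and> Q = R)}"

definition midpt :: "pt \<Rightarrow> pt \<Rightarrow> pt" where
  "midpt P Q = ((fst P + fst Q) / 2, (snd P + snd Q) / 2)"

definition subpt :: "nat \<Rightarrow> pt \<Rightarrow> pt" where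
  "subpt i p =
     (let A = (0,0); B = p; C = (1,0);
          D = midpt A B; E = midpt B C; F = midpt A C;
          G = ((fst A + fst B + fst C) / 3, (snd A + snd B + snd C) / 3)
      in if i = 1 then charpt A D G
         else if i = 2 then charpt D B G
         else if i = 3 then charpt B E G
         else if i = 4 then charpt E C G
         else if i = 5 then charpt C F G
         else charpt F A G)"

definition xi :: "nat \<Rightarrow> real \<Rightarrow> real \<Rightarrow> real" where
  "xi i x y = fst (subpt i (x, y))"

definition yi :: "nat \<Rightarrow> real \<Rightarrow> real \<Rightarrow> real" where
  "yi i x y = snd (subpt i (x, y))"

definition zi :: "nat \<Rightarrow> real \<Rightarrow> real" where
  "zi i x = xi i x 0"

text \<open>Iterates along a word (i_1,...,i_N): i_1 is applied first.\<close>
definition xy_iter :: "nat list \<Rightarrow> pt \<Rightarrow> pt" where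
  "xy_iter is p = foldl (\<lambda>q i. (xi i (fst q) (snd q), yi i (fst q) (snd q))) p is"

definition z_iter :: "nat list \<Rightarrow> real \<Rightarrow> real" where
  "z_iter is x = foldl (\<lambda>z i. zi i z) x is"

end

theory Submission
  imports Defs
begin


definition sq :: "pt \<Rightarrow> pt \<Rightarrow> real" where
  "sq P Q = (fst P - fst Q)^2 + (snd P - snd Q)^2"

definition cross :: "pt \<Rightarrow> pt \<Rightarrow> pt \<Rightarrow> real" where
  "cross P Q R = (fst Q - fst P)*(snd R - snd P) - (snd Q - snd P)*(fst R - fst P)"

definition mx3 :: "real \<Rightarrow> real \<Rightarrow> real \<Rightarrow> real" where "mx3 a b c = max a (max b c)"
definition mn3 :: "real \<Rightarrow> real \<Rightarrow> real \<Rightarrow> real" where "mn3 a b c = min a (min b c)"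

lemma lin2: "a \<le> b + c \<Longrightarrow> b \<le> d \<Longrightarrow> c \<le> d \<Longrightarrow> a \<le> 2 * (d::real)" by linarith
lemma lin4: "a \<le> b + c \<Longrightarrow> b \<le> 2 * bb \<Longrightarrow> c \<le> 2 * cc \<Longrightarrow> bb \<le> 2*x \<Longrightarrow> cc \<le> 2*y \<Longrightarrow> a \<le> 4 * (x + (y::real))" by (simp add: algebra_simps)

lemma sort_sq:
  fixes l1 l2 l3 :: real
  assumes "0 \<le> l1" "0 \<le> l2" "0 \<le> l3"
  shows "(max l1 (max l2 l3))^2 = mx3 (l1^2) (l2^2) (l3^2)"
    "(min l1 (min l2 l3))^2 = mn3 (l1^2) (l2^2) (l3^2)"
    "(l1+l2+l3 - max l1 (max l2 l3) - min l1 (min l2 l3))^2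
       = l1^2+l2^2+l3^2 - mx3 (l1^2) (l2^2) (l3^2) - mn3 (l1^2) (l2^2) (l3^2)"
proof -
  have m: "\<And>u v::real. 0 \<le> u \<Longrightarrow> 0 \<le> v \<Longrightarrow> (u \<le> v) = (u^2 \<le> v^2)"
    by (simp add: power_mono_iff)
  show "(max l1 (max l2 l3))^2 = mx3 (l1^2) (l2^2) (l3^2)"
    "(min l1 (min l2 l3))^2 = mn3 (l1^2) (l2^2) (l3^2)"
    "(l1+l2+l3 - max l1 (max l2 l3) - min l1 (min l2 l3))^2
       = l1^2+l2^2+l3^2 - mx3 (l1^2) (l2^2) (l3^2) - mn3 (l1^2) (l2^2) (l3^2)"
    using m[OF assms(1) assms(2)] m[OF assms(2) assms(3)] m[OF assms(1) assms(3)]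
      m[OF assms(2) assms(1)] m[OF assms(3) assms(2)] m[OF assms(3) assms(1)]
    unfolding mx3_def mn3_def max_def min_def by auto
qed

lemma e2:
  fixes s1 s2 s3 :: real
  shows "mx3 s1 s2 s3 * mn3 s1 s2 s3 + (mx3 s1 s2 s3 + mn3 s1 s2 s3) * (s1+s2+s3 - mx3 s1 s2 s3 - mn3 s1 s2 s3)
     = s1*s2+s2*s3+s3*s1"
  unfolding mx3_def mn3_def max_def min_def by (auto simp: algebra_simps)

lemma median:
  fixes s1 s2 s3 :: real
  shows "mn3 s1 s2 s3 \<le> s1+s2+s3 - mx3 s1 s2 s3 - mn3 s1 s2 s3"
    "s1+s2+s3 - mx3 s1 s2 s3 - mn3 s1 s2 s3 \<le> mx3 s1 s2 s3"
    "s1 \<le> mx3 s1 s2 s3" "s2 \<le> mx3 s1 s2 s3" "s3 \<le> mx3 s1 s2 s3"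
    "mn3 s1 s2 s3 \<le> s1" "mn3 s1 s2 s3 \<le> s2" "mn3 s1 s2 s3 \<le> s3"
  unfolding mx3_def mn3_def max_def min_def by auto

lemma heron:
  "4 * (sq P Q * sq Q R + sq Q R * sq R P + sq R P * sq P Q) - (sq P Q + sq Q R + sq R P)^2
    = 4 * (cross P Q R)^2"
  unfolding sq_def cross_def by (simp add: algebra_simps power2_eq_square)

lemma seglen_sq: "(seglen P Q)^2 = sq P Q"
  unfolding seglen_def sq_def by simp


lemma charpt_eq:
  fixes P Q R :: pt
  defines "s1 \<equiv> sq P Q" and "s2 \<equiv> sq Q R" and "s3 \<equiv> sq R P"
  defines "A \<equiv> mx3 s1 s2 s3" and "C \<equiv> mn3 s1 s2 s3"
  defines "B \<equiv> s1 + s2 + s3 - A - C"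
  shows "charpt P Q R = ((A + C - B) / (2*A), \<bar>cross P Q R\<bar> / A)"
proof -
  define l1 where "l1 = seglen P Q"
  define l2 where "l2 = seglen Q R"
  define l3 where "l3 = seglen R P"
  have nn: "0 \<le> l1" "0 \<le> l2" "0 \<le> l3" unfolding l1_def l2_def l3_def seglen_def by auto
  have ls: "l1^2 = s1" "l2^2 = s2" "l3^2 = s3"
    unfolding l1_def l2_def l3_def s1_def s2_def s3_def seglen_sq by auto
  note so = sort_sq[OF nn, unfolded ls]
  have Aeq: "(max l1 (max l2 l3))^2 = A" using so(1) A_def by simp
  have Ceq: "(min l1 (min l2 l3))^2 = C" using so(2) C_def by simp
  have Beq: "(l1+l2+l3 - max l1 (max l2 l3) - min l1 (min l2 l3))^2 = B"
    using so(3) A_def B_def C_def by simp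
  have fstx: "fst (charpt P Q R) = (A + C - B) / (2*A)"
    unfolding charpt_def Let_def l1_def[symmetric] l2_def[symmetric] l3_def[symmetric]
    using Aeq Beq Ceq by simp
  have sndx: "snd (charpt P Q R) = sqrt (C / A - ((A + C - B) / (2*A))^2)"
    unfolding charpt_def Let_def l1_def[symmetric] l2_def[symmetric] l3_def[symmetric]
    using Aeq Beq Ceq by (simp add: power_divide)
  have key: "4*A*C - (A + C - B)^2 = 4 * (cross P Q R)^2"
  proof -
    have "4*A*C - (A + C - B)^2 = 4 * (A*C + (A+C)*(s1+s2+s3-A-C)) - (s1+s2+s3)^2"
      unfolding B_def by (simp add: algebra_simps power2_eq_square)
    also have "\<dots> = 4*(s1*s2+s2*s3+s3*s1) - (s1+s2+s3)^2"
      using e2[of s1 s2 s3] A_def C_def by simp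
    also have "\<dots> = 4 * (cross P Q R)^2"
      using heron[of P Q R] unfolding s1_def s2_def s3_def by (simp add: algebra_simps)
    finally show ?thesis .
  qed
  have "snd (charpt P Q R) = \<bar>cross P Q R\<bar> / A"
  proof (cases "A = 0")
    case True
    then show ?thesis using sndx by simp
  next
    case False
    have "C / A - ((A + C - B) / (2*A))^2 = (4*A*C - (A + C - B)^2) / (4*A^2)"
      using False by (simp add: field_simps power2_eq_square)
    also have "\<dots> = (cross P Q R / A)^2" using key False by (simp add: field_simps power2_eq_square)
    moreover have "0 \<le> A" using median(3)[of s1 s2 s3] unfolding A_def s1_def sq_def
      by (meson add_nonneg_nonneg order_trans zero_le_power2)
    ultimately show ?thesis using sndx by simp
  qed
  then show ?thesis using fstx by (simp add: prod_eq_iff)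
qed

lemma key_id:
  fixes P Q R :: pt
  defines "s1 \<equiv> sq P Q" and "s2 \<equiv> sq Q R" and "s3 \<equiv> sq R P"
  defines "A \<equiv> mx3 s1 s2 s3" and "C \<equiv> mn3 s1 s2 s3"
  defines "B \<equiv> s1 + s2 + s3 - A - C"
  shows "4*A*C - (A + C - B)^2 = 4 * (cross P Q R)^2"
proof -
    have "4*A*C - (A + C - B)^2 = 4 * (A*C + (A+C)*(s1+s2+s3-A-C)) - (s1+s2+s3)^2"
      unfolding B_def by (simp add: algebra_simps power2_eq_square)
    also have "\<dots> = 4*(s1*s2+s2*s3+s3*s1) - (s1+s2+s3)^2"
      using e2[of s1 s2 s3] A_def C_def by simp
    also have "\<dots> = 4 * (cross P Q R)^2"
      using heron[of P Q R] unfolding s1_def s2_def s3_def by (simp add: algebra_simps)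
    finally show ?thesis .
qed

definition Rg :: "pt set" where
  "Rg = {p. 0 \<le> fst p \<and> fst p \<le> 1/2 \<and> 0 \<le> snd p \<and> snd p \<le> 1}"

lemma sq_nn: "0 \<le> sq P Q" unfolding sq_def by simp

lemma charpt_R: "charpt P Q R \<in> Rg"
proof -
  define s1 where "s1 = sq P Q"
  define s2 where "s2 = sq Q R"
  define s3 where "s3 = sq R P"
  define A where "A = mx3 s1 s2 s3"
  define C where "C = mn3 s1 s2 s3"
  define B where "B = s1 + s2 + s3 - A - C"
  have ce: "charpt P Q R = ((A + C - B) / (2*A), \<bar>cross P Q R\<bar> / A)"
    unfolding A_def B_def C_def s1_def s2_def s3_def by (rule charpt_eq)
  have k: "4*A*C - (A + C - B)^2 = 4 * (cross P Q R)^2"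
    unfolding A_def B_def C_def s1_def s2_def s3_def by (rule key_id)
  have nn: "0 \<le> s1" "0 \<le> s2" "0 \<le> s3" unfolding s1_def s2_def s3_def by (auto simp: sq_nn)
  have C0: "0 \<le> C" unfolding C_def mn3_def using nn by auto
  have m: "C \<le> B" "B \<le> A" "C \<le> A" unfolding A_def B_def C_def using median[of s1 s2 s3] by auto
  show ?thesis
  proof (cases "A = 0")
    case True
    then show ?thesis using ce by (simp add: Rg_def)
  next
    case False
    then have Ap: "0 < A" using m C0 by auto
    have "(cross P Q R)^2 \<le> A^2"
    proof -
      have "4 * (cross P Q R)^2 \<le> 4*A*C" using k zero_le_power2[of "A + C - B"] by linarith
      also have "\<dots> \<le> 4*A*A" using m Ap by (simp add: mult_left_mono)
      finally show ?thesis by (simp add: power2_eq_square)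
    qed
    then have "\<bar>cross P Q R\<bar> \<le> A" using abs_le_square_iff[of "cross P Q R" A] Ap by simp
    then show ?thesis using ce Ap m C0 by (simp add: Rg_def divide_simps)
  qed
qed

definition V :: "real \<times> real \<times> real \<Rightarrow> pt \<Rightarrow> pt" where
  "V c p = (case c of (c0, c1, c2) \<Rightarrow> (c0 + c1 * fst p, c2 * snd p))"

definition good :: "real \<times> real \<times> real \<Rightarrow> bool" where
  "good c = (case c of (c0, c1, c2) \<Rightarrow> 0 \<le> c0 \<and> 0 \<le> c1 \<and> c0 + c1 \<le> 1 \<and> 0 \<le> c2 \<and> c2 \<le> 1)"

definition ok :: "real \<times> real \<times> real \<Rightarrow> real \<times> real \<times> real \<Rightarrow> real \<times> real \<times> real \<Rightarrow> bool" where
  "ok a b c = (good a \<and> good b \<and> good c \<and>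
     (\<forall>p\<in>Rg. 1/16 \<le> mx3 (sq (V a p) (V b p)) (sq (V b p) (V c p)) (sq (V c p) (V a p))) \<and>
     (\<forall>p. \<bar>cross (V a p) (V b p) (V c p)\<bar> = \<bar>snd p\<bar> / 6))"

lemma lbA1: "1/16 \<le> s1 \<Longrightarrow> 1/16 \<le> mx3 s1 s2 s3"
  unfolding mx3_def by auto
lemma lbA3: "1/16 \<le> s3 \<Longrightarrow> 1/16 \<le> mx3 s1 s2 s3"
  unfolding mx3_def by auto

lemma sq_lb: "1/4 \<le> \<bar>u\<bar> \<Longrightarrow> 1/16 \<le> (u::real)^2 + w^2"
proof -
  assume "1/4 \<le> \<bar>u\<bar>"
  then have "(1/4)^2 \<le> \<bar>u\<bar>^2" by (rule power_mono) simp
  then have "1/16 \<le> u^2" by (simp add: power2_abs power_divide)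
  then show ?thesis using zero_le_power2[of w] by linarith
qed

lemma abs6: "u = v/6 \<or> u = -(v/6) \<Longrightarrow> \<bar>u\<bar> = \<bar>v\<bar>/(6::real)"
  by auto

lemma subpt_ok: "\<exists>a b c. ok a b c \<and> (\<forall>p. subpt i p = charpt (V a p) (V b p) (V c p))"
proof -
  consider "i = 1" | "i = 2" | "i = 3" | "i = 4" | "i = 5" | "i \<noteq> 1 \<and> i \<noteq> 2 \<and> i \<noteq> 3 \<and> i \<noteq> 4 \<and> i \<noteq> 5" by blast
  then show ?thesis
  proof cases
    case 1
    show ?thesis
      apply (rule exI[of _ "(0,0,0)"], rule exI[of _ "(0,1/2,1/2)"], rule exI[of _ "(1/3,1/3,1/3)"])
      apply (intro conjI allI)
      subgoal by (unfold ok_def good_def, intro conjI ballI allI;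
   (rule abs6 lbA3)?; (unfold sq_def)?; (rule sq_lb)?; (simp add: V_def sq_def Rg_def cross_def algebra_simps)?;
   (auto simp: algebra_simps intro!: sq_lb)?)
      subgoal using 1 by (simp add: subpt_def midpt_def V_def Let_def add_divide_distrib algebra_simps)
      done
  next
    case 2
    show ?thesis
      apply (rule exI[of _ "(0,1/2,1/2)"], rule exI[of _ "(0,1,1)"], rule exI[of _ "(1/3,1/3,1/3)"])
      apply (intro conjI allI)
      subgoal by (unfold ok_def good_def, intro conjI ballI allI;
   (rule abs6 lbA3)?; (unfold sq_def)?; (rule sq_lb)?; (simp add: V_def sq_def Rg_def cross_def algebra_simps)?;
   (auto simp: algebra_simps intro!: sq_lb)?)
      subgoal using 2 by (simp add: subpt_def midpt_def V_def Let_def add_divide_distrib algebra_simps)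
      done
  next
    case 3
    show ?thesis
      apply (rule exI[of _ "(0,1,1)"], rule exI[of _ "(1/2,1/2,1/2)"], rule exI[of _ "(1/3,1/3,1/3)"])
      apply (intro conjI allI)
      subgoal by (unfold ok_def good_def, intro conjI ballI allI;
   (rule abs6 lbA1)?; (unfold sq_def)?; (rule sq_lb)?; (simp add: V_def sq_def Rg_def cross_def algebra_simps)?;
   (auto simp: algebra_simps intro!: sq_lb)?)
      subgoal using 3 by (simp add: subpt_def midpt_def V_def Let_def add_divide_distrib algebra_simps)
      done
  next
    case 4
    show ?thesis
      apply (rule exI[of _ "(1/2,1/2,1/2)"], rule exI[of _ "(1,0,0)"], rule exI[of _ "(1/3,1/3,1/3)"])
      apply (intro conjI allI)
      subgoal by (unfold ok_def good_def, intro conjI ballI allI;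
   (rule abs6 lbA1)?; (unfold sq_def)?; (rule sq_lb)?; (simp add: V_def sq_def Rg_def cross_def algebra_simps)?;
   (auto simp: algebra_simps intro!: sq_lb)?)
      subgoal using 4 by (simp add: subpt_def midpt_def V_def Let_def add_divide_distrib algebra_simps)
      done
  next
    case 5
    show ?thesis
      apply (rule exI[of _ "(1,0,0)"], rule exI[of _ "(1/2,0,0)"], rule exI[of _ "(1/3,1/3,1/3)"])
      apply (intro conjI allI)
      subgoal by (unfold ok_def good_def, intro conjI ballI allI;
   (rule abs6 lbA1)?; (unfold sq_def)?; (rule sq_lb)?; (simp add: V_def sq_def Rg_def cross_def algebra_simps)?;
   (auto simp: algebra_simps intro!: sq_lb)?)
      subgoal using 5 by (simp add: subpt_def midpt_def V_def Let_def add_divide_distrib algebra_simps)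
      done
  next
    case 6
    show ?thesis
      apply (rule exI[of _ "(1/2,0,0)"], rule exI[of _ "(0,0,0)"], rule exI[of _ "(1/3,1/3,1/3)"])
      apply (intro conjI allI)
      subgoal by (unfold ok_def good_def, intro conjI ballI allI;
   (rule abs6 lbA1)?; (unfold sq_def)?; (rule sq_lb)?; (simp add: V_def sq_def Rg_def cross_def algebra_simps)?;
   (auto simp: algebra_simps intro!: sq_lb)?)
      subgoal using 6 by (simp add: subpt_def midpt_def V_def Let_def add_divide_distrib algebra_simps)
      done
  qed
qed

lemma V_coord:
  assumes "good a" "p \<in> Rg" "q \<in> Rg"
  shows "0 \<le> fst (V a p)" "fst (V a p) \<le> 1" "0 \<le> snd (V a p)" "snd (V a p) \<le> 1"
    "\<bar>fst (V a p) - fst (V a q)\<bar> \<le> \<bar>fst p - fst q\<bar>"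
    "\<bar>snd (V a p) - snd (V a q)\<bar> \<le> \<bar>snd p - snd q\<bar>"
proof -
  obtain a0 a1 a2 where a: "a = (a0, a1, a2)" by (cases a) auto
  obtain x y where p: "p = (x, y)" by (cases p)
  obtain x' y' where q: "q = (x', y')" by (cases q)
  have g: "0 \<le> a0" "0 \<le> a1" "a0 + a1 \<le> 1" "0 \<le> a2" "a2 \<le> 1" using assms(1) a by (auto simp: good_def)
  have r: "0 \<le> x" "x \<le> 1/2" "0 \<le> y" "y \<le> 1" "0 \<le> x'" "x' \<le> 1/2" "0 \<le> y'" "y' \<le> 1"
    using assms(2,3) p q by (auto simp: Rg_def)
  have m1: "0 \<le> a1 * x" "a1 * x \<le> a1" using g r by (auto intro: mult_left_le)
  have m2: "0 \<le> a2 * y" "a2 * y \<le> 1" using g r by (auto intro: mult_le_one)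
  have d1: "\<bar>a1 * x - a1 * x'\<bar> \<le> \<bar>x - x'\<bar>"
  proof -
    have "\<bar>a1 * x - a1 * x'\<bar> = a1 * \<bar>x - x'\<bar>" using g by (simp add: abs_mult right_diff_distrib[symmetric])
    also have "\<dots> \<le> \<bar>x - x'\<bar>" using g by (auto intro: mult_left_le_one_le)
    finally show ?thesis .
  qed
  have d2: "\<bar>a2 * y - a2 * y'\<bar> \<le> \<bar>y - y'\<bar>"
  proof -
    have "\<bar>a2 * y - a2 * y'\<bar> = a2 * \<bar>y - y'\<bar>" using g by (simp add: abs_mult right_diff_distrib[symmetric])
    also have "\<dots> \<le> \<bar>y - y'\<bar>" using g by (auto intro: mult_left_le_one_le)
    finally show ?thesis .
  qed
  show "0 \<le> fst (V a p)" "fst (V a p) \<le> 1" "0 \<le> snd (V a p)" "snd (V a p) \<le> 1"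
    "\<bar>fst (V a p) - fst (V a q)\<bar> \<le> \<bar>fst p - fst q\<bar>"
    "\<bar>snd (V a p) - snd (V a q)\<bar> \<le> \<bar>snd p - snd q\<bar>"
    using g m1 m2 d1 d2 by (auto simp: a p q V_def)
qed

lemma sqdiff: "\<bar>u\<bar> \<le> 1 \<Longrightarrow> \<bar>u'\<bar> \<le> 1 \<Longrightarrow> \<bar>u^2 - u'^2\<bar> \<le> 2 * \<bar>u - u'\<bar>" for u u' :: real
proof -
  assume "\<bar>u\<bar> \<le> 1" "\<bar>u'\<bar> \<le> 1"
  then have "\<bar>u + u'\<bar> \<le> 2" by simp
  have "\<bar>u^2 - u'^2\<bar> = \<bar>u - u'\<bar> * \<bar>u + u'\<bar>" by (simp add: power2_eq_square abs_mult[symmetric] algebra_simps)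
  also have "\<dots> \<le> \<bar>u - u'\<bar> * 2" using \<open>\<bar>u + u'\<bar> \<le> 2\<close> by (intro mult_left_mono) auto
  finally show ?thesis by simp
qed

lemma sq_lip:
  assumes "good a" "good b" "p \<in> Rg" "q \<in> Rg"
  shows "\<bar>sq (V a p) (V b p) - sq (V a q) (V b q)\<bar> \<le> 4 * (\<bar>fst p - fst q\<bar> + \<bar>snd p - snd q\<bar>)"
    "0 \<le> sq (V a p) (V b p)" "sq (V a p) (V b p) \<le> 2"
proof -
  note A = V_coord[OF assms(1,3,4)] and A' = V_coord[OF assms(1,4,3)]
  note B = V_coord[OF assms(2,3,4)] and B' = V_coord[OF assms(2,4,3)]
  define u where "u = fst (V a p) - fst (V b p)"
  define u' where "u' = fst (V a q) - fst (V b q)"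
  define v where "v = snd (V a p) - snd (V b p)"
  define v' where "v' = snd (V a q) - snd (V b q)"
  have b: "\<bar>u\<bar> \<le> 1" "\<bar>u'\<bar> \<le> 1" "\<bar>v\<bar> \<le> 1" "\<bar>v'\<bar> \<le> 1"
    unfolding u_def u'_def v_def v'_def abs_le_iff using A(1-4) A'(1-4) B(1-4) B'(1-4)
    by (intro conjI; linarith)+
  have du: "\<bar>u - u'\<bar> \<le> 2 * \<bar>fst p - fst q\<bar>"
  proof -
    have "u - u' = (fst (V a p) - fst (V a q)) - (fst (V b p) - fst (V b q))" by (simp add: u_def u'_def)
    then have "\<bar>u - u'\<bar> \<le> \<bar>fst (V a p) - fst (V a q)\<bar> + \<bar>fst (V b p) - fst (V b q)\<bar>"
      by (metis abs_triangle_ineq4)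
    then show ?thesis using A(5) B(5) by (rule lin2)
  qed
  have dv: "\<bar>v - v'\<bar> \<le> 2 * \<bar>snd p - snd q\<bar>"
  proof -
    have "v - v' = (snd (V a p) - snd (V a q)) - (snd (V b p) - snd (V b q))" by (simp add: v_def v'_def)
    then have "\<bar>v - v'\<bar> \<le> \<bar>snd (V a p) - snd (V a q)\<bar> + \<bar>snd (V b p) - snd (V b q)\<bar>"
      by (metis abs_triangle_ineq4)
    then show ?thesis using A(6) B(6) by (rule lin2)
  qed
  have e: "sq (V a p) (V b p) = u^2 + v^2" "sq (V a q) (V b q) = u'^2 + v'^2"
    by (simp_all add: sq_def u_def u'_def v_def v'_def)
  show "\<bar>sq (V a p) (V b p) - sq (V a q) (V b q)\<bar> \<le> 4 * (\<bar>fst p - fst q\<bar> + \<bar>snd p - snd q\<bar>)"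
  proof -
    have "u^2 + v^2 - (u'^2 + v'^2) = (u^2 - u'^2) + (v^2 - v'^2)" by simp
    then have "\<bar>u^2 + v^2 - (u'^2 + v'^2)\<bar> \<le> \<bar>u^2 - u'^2\<bar> + \<bar>v^2 - v'^2\<bar>"
      by (metis abs_triangle_ineq)
    then show ?thesis unfolding e by (rule lin4[OF _ sqdiff[OF b(1,2)] sqdiff[OF b(3,4)] du dv])
  qed
  show "0 \<le> sq (V a p) (V b p)" by (simp add: sq_nn)
  have "u^2 \<le> 1" "v^2 \<le> 1" using b by (auto simp: abs_square_le_1)
  then show "sq (V a p) (V b p) \<le> 2" unfolding e by linarith
qed

lemma mx3_lip: "\<bar>mx3 s1 s2 s3 - mx3 t1 t2 t3\<bar> \<le> \<bar>s1 - t1\<bar> + \<bar>s2 - t2\<bar> + \<bar>s3 - t3\<bar>"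
proof -
  have "mx3 s1 s2 s3 \<le> mx3 t1 t2 t3 + (\<bar>s1 - t1\<bar> + \<bar>s2 - t2\<bar> + \<bar>s3 - t3\<bar>)"
    "mx3 t1 t2 t3 \<le> mx3 s1 s2 s3 + (\<bar>s1 - t1\<bar> + \<bar>s2 - t2\<bar> + \<bar>s3 - t3\<bar>)"
    unfolding mx3_def max.bounded_iff by (auto simp: le_max_iff_disj; linarith)+
  then show ?thesis by linarith
qed

lemma mn3_lip: "\<bar>mn3 s1 s2 s3 - mn3 t1 t2 t3\<bar> \<le> \<bar>s1 - t1\<bar> + \<bar>s2 - t2\<bar> + \<bar>s3 - t3\<bar>"
proof -
  have "mn3 s1 s2 s3 \<le> mn3 t1 t2 t3 + (\<bar>s1 - t1\<bar> + \<bar>s2 - t2\<bar> + \<bar>s3 - t3\<bar>)"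
    "mn3 t1 t2 t3 \<le> mn3 s1 s2 s3 + (\<bar>s1 - t1\<bar> + \<bar>s2 - t2\<bar> + \<bar>s3 - t3\<bar>)"
    unfolding mn3_def by (auto simp: min_le_iff_disj; linarith)+
  then show ?thesis by linarith
qed

lemma quot_lip:
  fixes u u' A A' m U :: real
  assumes "0 < m" "m \<le> A" "m \<le> A'" "\<bar>u'\<bar> \<le> U"
  shows "\<bar>u/A - u'/A'\<bar> \<le> \<bar>u - u'\<bar>/m + U * \<bar>A - A'\<bar> / m^2"
proof -
  have Ap: "0 < A" "0 < A'" using assms by auto
  have eq: "u/A - u'/A' = (u - u')/A + u' * (A' - A) / (A * A')" using Ap by (simp add: field_simps)
  have t1: "\<bar>(u - u')/A\<bar> \<le> \<bar>u - u'\<bar>/m"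
  proof -
    have "\<bar>(u - u')/A\<bar> = \<bar>u - u'\<bar>/A" using Ap by simp
    also have "\<dots> \<le> \<bar>u - u'\<bar>/m" using Ap assms(1,2) by (intro divide_left_mono) auto
    finally show ?thesis .
  qed
  have "\<bar>u' * (A' - A) / (A * A')\<bar> = \<bar>u'\<bar> * \<bar>A - A'\<bar> / (A * A')"
    using Ap by (simp add: abs_mult abs_minus_commute)
  also have "\<dots> \<le> U * \<bar>A - A'\<bar> / m^2"
  proof (rule frac_le)
    show "0 \<le> U * \<bar>A - A'\<bar>" using assms(4) by simp
    show "\<bar>u'\<bar> * \<bar>A - A'\<bar> \<le> U * \<bar>A - A'\<bar>" using assms(4) by (simp add: mult_right_mono)
    show "0 < m^2" using assms by simp
    show "m^2 \<le> A * A'" using assms by (simp add: power2_eq_square mult_mono)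
  qed
  finally have t2: "\<bar>u' * (A' - A) / (A * A')\<bar> \<le> U * \<bar>A - A'\<bar> / m^2" .
  have "\<bar>u/A - u'/A'\<bar> \<le> \<bar>(u - u')/A\<bar> + \<bar>u' * (A' - A) / (A * A')\<bar>"
    unfolding eq by (rule abs_triangle_ineq)
  then show ?thesis using t1 t2 by linarith
qed


lemma lin5:
  fixes a a' c c' s1 s2 s3 t1 t2 t3 d :: real
  assumes "\<bar>a - a'\<bar> \<le> d" "\<bar>c - c'\<bar> \<le> d" "d = \<bar>s1 - t1\<bar> + \<bar>s2 - t2\<bar> + \<bar>s3 - t3\<bar>"
  shows "\<bar>(a + c - (s1 + s2 + s3 - a - c)) - (a' + c' - (t1 + t2 + t3 - a' - c'))\<bar> \<le> 5 * d"
  using assms by (auto simp: abs_le_iff abs_if split: if_splits)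


lemma ok_lip:
  assumes ok: "ok a b c" and p: "p \<in> Rg" and q: "q \<in> Rg"
  shows "\<bar>fst (charpt (V a p) (V b p) (V c p)) - fst (charpt (V a q) (V b q) (V c q))\<bar>
          \<le> 4000 * (\<bar>fst p - fst q\<bar> + \<bar>snd p - snd q\<bar>)"
proof -
  have g: "good a" "good b" "good c" using ok by (auto simp: ok_def)
  define s1 where "s1 = sq (V a p) (V b p)"
  define s2 where "s2 = sq (V b p) (V c p)"
  define s3 where "s3 = sq (V c p) (V a p)"
  define t1 where "t1 = sq (V a q) (V b q)"
  define t2 where "t2 = sq (V b q) (V c q)"
  define t3 where "t3 = sq (V c q) (V a q)"
  define \<Delta> where "\<Delta> = \<bar>fst p - fst q\<bar> + \<bar>snd p - snd q\<bar>"
  define d where "d = \<bar>s1 - t1\<bar> + \<bar>s2 - t2\<bar> + \<bar>s3 - t3\<bar>"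
  have l1: "\<bar>s1 - t1\<bar> \<le> 4 * \<Delta>" "0 \<le> s1" "s1 \<le> 2"
    unfolding s1_def t1_def \<Delta>_def using sq_lip[OF g(1,2) p q] by auto
  have l2: "\<bar>s2 - t2\<bar> \<le> 4 * \<Delta>" "0 \<le> s2" "s2 \<le> 2"
    unfolding s2_def t2_def \<Delta>_def using sq_lip[OF g(2,3) p q] by auto
  have l3: "\<bar>s3 - t3\<bar> \<le> 4 * \<Delta>" "0 \<le> s3" "s3 \<le> 2"
    unfolding s3_def t3_def \<Delta>_def using sq_lip[OF g(3,1) p q] by auto
  have k1: "0 \<le> t1" "t1 \<le> 2" unfolding t1_def using sq_lip[OF g(1,2) q p] by auto
  have k2: "0 \<le> t2" "t2 \<le> 2" unfolding t2_def using sq_lip[OF g(2,3) q p] by auto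
  have k3: "0 \<le> t3" "t3 \<le> 2" unfolding t3_def using sq_lip[OF g(3,1) q p] by auto
  have dD: "d \<le> 12 * \<Delta>" using l1 l2 l3 unfolding d_def by linarith
  define A where "A = mx3 s1 s2 s3"
  define C where "C = mn3 s1 s2 s3"
  define A' where "A' = mx3 t1 t2 t3"
  define C' where "C' = mn3 t1 t2 t3"
  define u where "u = A + C - (s1 + s2 + s3 - A - C)"
  define u' where "u' = A' + C' - (t1 + t2 + t3 - A' - C')"
  have Alb: "1/16 \<le> A" using ok p unfolding ok_def A_def s1_def s2_def s3_def by auto
  have A'lb: "1/16 \<le> A'" using ok q unfolding ok_def A'_def t1_def t2_def t3_def by auto
  have ce: "charpt (V a p) (V b p) (V c p) = (u / (2*A), \<bar>cross (V a p) (V b p) (V c p)\<bar> / A)"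
    unfolding u_def A_def C_def s1_def s2_def s3_def by (rule charpt_eq)
  have ce': "charpt (V a q) (V b q) (V c q) = (u' / (2*A'), \<bar>cross (V a q) (V b q) (V c q)\<bar> / A')"
    unfolding u'_def A'_def C'_def t1_def t2_def t3_def by (rule charpt_eq)
  have dA: "\<bar>A - A'\<bar> \<le> d" unfolding A_def A'_def d_def by (rule mx3_lip)
  have dC: "\<bar>C - C'\<bar> \<le> d" unfolding C_def C'_def d_def by (rule mn3_lip)
  have du: "\<bar>u - u'\<bar> \<le> 5 * d"
    unfolding u_def u'_def by (rule lin5[OF dA dC d_def])
  have mA': "A' \<le> 2" unfolding A'_def mx3_def using k1 k2 k3 by auto
  have m1: "C' \<le> t1 + t2 + t3 - A' - C'" "t1 + t2 + t3 - A' - C' \<le> A'"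
    unfolding A'_def C'_def by (rule median(1), rule median(2))
  have u'b: "\<bar>u'\<bar> \<le> 2"
  proof -
    have "0 \<le> C'" unfolding C'_def mn3_def using k1 k2 k3 by auto
    then show ?thesis unfolding u'_def abs_le_iff using m1 mA' by (intro conjI; linarith)
  qed
  have ql: "\<bar>u/A - u'/A'\<bar> \<le> \<bar>u - u'\<bar>/(1/16) + 2 * \<bar>A - A'\<bar> / (1/16)^2"
    by (rule quot_lip) (use Alb A'lb u'b in auto)
  then have "\<bar>u/A - u'/A'\<bar> \<le> 592 * d" using du dA by (simp add: power2_eq_square)
  moreover have "u / (2*A) - u' / (2*A') = (u/A - u'/A') / 2" by (simp add: field_simps)
  ultimately have "\<bar>u / (2*A) - u' / (2*A')\<bar> \<le> 296 * d" by simp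
  then show ?thesis using ce ce' dD unfolding \<Delta>_def[symmetric] by simp
qed

lemma ok_ybound:
  assumes ok: "ok a b c" and p: "p \<in> Rg"
  shows "snd (charpt (V a p) (V b p) (V c p)) \<le> 3 * snd p"
proof -
  define A where "A = mx3 (sq (V a p) (V b p)) (sq (V b p) (V c p)) (sq (V c p) (V a p))"
  have Alb: "1/16 \<le> A" using ok p unfolding ok_def A_def by auto
  have "\<bar>cross (V a p) (V b p) (V c p)\<bar> = \<bar>snd p\<bar> / 6" using ok unfolding ok_def by blast
  then have cr: "\<bar>cross (V a p) (V b p) (V c p)\<bar> = snd p / 6" using p unfolding Rg_def by simp
  have "snd (charpt (V a p) (V b p) (V c p)) = (snd p / 6) / A"
    using charpt_eq[of "V a p" "V b p" "V c p"] cr unfolding A_def by simp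
  also have "\<dots> \<le> (snd p / 6) / (1/16)"
    using Alb p by (intro divide_left_mono) (auto simp: Rg_def)
  also have "\<dots> \<le> 3 * snd p" using p by (simp add: Rg_def)
  finally show ?thesis .
qed



lemma P1: "subpt i p \<in> Rg"
  using subpt_ok[of i] charpt_R by metis

lemma P2: "p \<in> Rg \<Longrightarrow> q \<in> Rg \<Longrightarrow>
   \<bar>fst (subpt i p) - fst (subpt i q)\<bar> \<le> 4000 * (\<bar>fst p - fst q\<bar> + \<bar>snd p - snd q\<bar>)"
  using subpt_ok[of i] ok_lip by metis

lemma P3: "p \<in> Rg \<Longrightarrow> snd (subpt i p) \<le> 3 * snd p"
  using subpt_ok[of i] ok_ybound by metis

lemma step_eq: "(\<lambda>q i. (xi i (fst q) (snd q), yi i (fst q) (snd q))) q i = subpt i q"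
  by (simp add: xi_def yi_def)

lemma iter_bound:
  "(x, y) \<in> Rg \<Longrightarrow> xy_iter w (x, y) \<in> Rg \<and> (z_iter w x, 0) \<in> Rg \<and>
     \<bar>fst (xy_iter w (x, y)) - z_iter w x\<bar> \<le> 8003 ^ length w * y \<and>
     snd (xy_iter w (x, y)) \<le> 8003 ^ length w * y"
proof (induction w rule: rev_induct)
  case Nil
  then show ?case by (simp add: xy_iter_def z_iter_def Rg_def)
next
  case (snoc i w)
  define X where "X = xy_iter w (x, y)"
  define Z where "Z = z_iter w x"
  define K :: real where "K = 8003 ^ length w"
  have IH: "X \<in> Rg" "(Z, 0) \<in> Rg" "\<bar>fst X - Z\<bar> \<le> K * y" "snd X \<le> K * y"
    using snoc unfolding X_def Z_def K_def by auto
  have y0: "0 \<le> y" using snoc.prems by (simp add: Rg_def)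
  have X0: "0 \<le> snd X" using IH(1) by (simp add: Rg_def)
  have K0: "0 \<le> K" unfolding K_def by simp
  have e1: "xy_iter (w @ [i]) (x, y) = subpt i X"
    unfolding xy_iter_def X_def by (simp add: xi_def yi_def)
  have e2: "z_iter (w @ [i]) x = fst (subpt i (Z, 0))"
    unfolding z_iter_def Z_def by (simp add: zi_def xi_def)
  have s0: "(fst (subpt i (Z, 0)), 0) \<in> Rg"
    using P1[of i "(Z,0)"] by (simp add: Rg_def)
  have "\<bar>fst (subpt i X) - fst (subpt i (Z, 0))\<bar> \<le> 4000 * (\<bar>fst X - Z\<bar> + \<bar>snd X - 0\<bar>)"
    using P2[OF IH(1) IH(2), of i] by simp
  also have "\<dots> \<le> 4000 * (K * y + K * y)" using IH X0 by simp
  also have "\<dots> \<le> 8003 * K * y" using K0 y0 by (simp add: mult_nonneg_nonneg)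
  finally have b1: "\<bar>fst (subpt i X) - fst (subpt i (Z, 0))\<bar> \<le> 8003 * K * y" .
  have "snd (subpt i X) \<le> 3 * snd X" by (rule P3[OF IH(1)])
  also have "\<dots> \<le> 8003 * K * y"
  proof -
    have "0 \<le> K * y" using K0 y0 by simp
    then have "3 * snd X \<le> 8003 * (K * y)" using IH(4) by linarith
    then show ?thesis by (simp add: mult.assoc)
  qed
  finally have b2: "snd (subpt i X) \<le> 8003 * K * y" .
  show ?case unfolding e1 e2 using P1 s0 b1 b2 by (simp add: K_def mult.assoc)
qed

theorem lemma21:
  fixes N :: nat
  assumes "N \<ge> 1"
  shows "\<exists>K::real. \<forall>is x y. length is = N \<longrightarrow> set is \<subseteq> {1..6} \<longrightarrow> (x, y) \<in> charD \<longrightarrow>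
           \<bar>fst (xy_iter is (x, y)) - z_iter is x\<bar> \<le> K * y \<and>
           \<bar>snd (xy_iter is (x, y))\<bar> \<le> K * y"
proof (intro exI[of _ "8003 ^ N"] allI impI)
  fix "is" :: "nat list" and x y :: real
  assume l: "length is = N" and d: "(x, y) \<in> charD"
  have R: "(x, y) \<in> Rg" using d charpt_R unfolding charD_def by auto
  note ib = iter_bound[OF R, of "is"]
  have "0 \<le> snd (xy_iter is (x, y))" using ib by (simp add: Rg_def)
  then show "\<bar>fst (xy_iter is (x, y)) - z_iter is x\<bar> \<le> 8003 ^ N * y \<and>
           \<bar>snd (xy_iter is (x, y))\<bar> \<le> 8003 ^ N * y" using ib l by simp
qed


end
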